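(* Let $\mu$ be a finite Borel measure on $\mathbb{R}$ with all moments $y_k=\int x^kd\mu$ finite, $\mathbf{y}=(y_k)$, and assume $\mathbf{H}_d(\mathbf{y})\succ0$ for all $d\in\mathbb{N}$. Fix $d\in\mathbb{N}$ and let $$a_d=\max_{a\in\mathbb{R}}\{a:\mathbf{H}_d(\theta_a\mathbf{y})\succeq0\},\qquad b_d=\min_{b\in\mathbb{R}}\{b:\mathbf{H}_d(-\theta_b\mathbf{y})\succeq0\},$$ $$a_d^*=\inf\Big\{\int x\,\sigma(x)\,d\mu(x):\ \sigma\in\Sigma[x]_d,\ \int\sigma\,d\mu=1\Big\},\qquad b_d^*=\sup\Big\{\int x\,\sigma(x)\,d\mu(x):\ \sigma\in\Sigma[x]_d,\ \int\sigma\,d\mu=1\Big\}.$$ Then $a_d=a_d^*$ and $b_d=b_d^*$; the infimum defining $a_d^*$ is attained at some $\sigma^*\in\Sigma[x]_d$ and the supremum defining $b_d^*$ is attained at some $\psi^*\in\Sigma[x]_d$; and $$\int(x-a_d)\,\sigma^*(x)\,d\mu(x)=0=\int(b_d-x)\,\psi^*(x)\,d\mu(x).$$ Moreover, if $\sigma^*=\sum_\ell p_\ell^2$ with polynomials $p_\ell$ of degree at most $d$ and coefficient vectors $\mathbf{p}_\ell\in\mathbb{R}^{d+1}$ (in the basis $1,x,\ldots,x^d$), then each $\mathbf{p}_\ell$ lies in the kernel of $\mathbf{H}_d(\theta_{a_d}\mathbf{y})$.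
   Context: $\Sigma[x]_d$ denotes the set of real univariate polynomials of degree at most $2d$ that are sums of squares of polynomials. For a sequence $\mathbf{y}=(y_k)_{k\in\mathbb{N}}$ and a polynomial $\theta(x)=\sum_{k=0}^s\theta_kx^k$, $\mathbf{H}_d(\theta\,\mathbf{y})$ is the $(d+1)\times(d+1)$ symmetric matrix with entries $\sum_{k=0}^s\theta_k\,y_{i+j+k-2}$, $i,j=1,\ldots,d+1$; $\mathbf{H}_d(\mathbf{y})$ is the Hankel matrix with entries $y_{i+j-2}$. For $a\in\mathbb{R}$, $\theta_a(x)=x-a$, so $\mathbf{H}_d(\theta_a\mathbf{y})(i,j)=y_{i+j-1}-a\,y_{i+j-2}$ and $\mathbf{H}_d(-\theta_b\mathbf{y})(i,j)=b\,y_{i+j-2}-y_{i+j-1}$. $\succeq0$ (resp. $\succ0$) denotes positive semidefiniteness (resp. definiteness). *)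

theory Defs
  imports "HOL-Analysis.Analysis" "HOL-Computational_Algebra.Polynomial"
begin

definition moment_seq :: "real measure \<Rightarrow> nat \<Rightarrow> real" where
  "moment_seq M k = integral\<^sup>L M (\<lambda>x. x ^ k)"

text \<open>Localizing Hankel matrix H_d(theta y), indexed by i, j in {0..d}
  (0-based, i.e. entry (i,j) here is entry (i+1,j+1) of the paper):
  entry = sum_k theta_k * y_(i+j+k).\<close>
definition hankel_loc :: "nat \<Rightarrow> real poly \<Rightarrow> (nat \<Rightarrow> real) \<Rightarrow> nat \<Rightarrow> nat \<Rightarrow> real" where
  "hankel_loc d \<theta> y i j = (\<Sum>k\<le>degree \<theta>. coeff \<theta> k * y (i + j + k))"

definition hankel :: "nat \<Rightarrow> (nat \<Rightarrow> real) \<Rightarrow> nat \<Rightarrow> nat \<Rightarrow> real" where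
  "hankel d y = hankel_loc d 1 y"

definition theta :: "real \<Rightarrow> real poly" where
  "theta a = [:-a, 1:]"

definition psd :: "nat \<Rightarrow> (nat \<Rightarrow> nat \<Rightarrow> real) \<Rightarrow> bool" where
  "psd d A \<longleftrightarrow> (\<forall>v::nat \<Rightarrow> real. 0 \<le> (\<Sum>i\<le>d. \<Sum>j\<le>d. v i * A i j * v j))"

definition pd :: "nat \<Rightarrow> (nat \<Rightarrow> nat \<Rightarrow> real) \<Rightarrow> bool" where
  "pd d A \<longleftrightarrow> (\<forall>v::nat \<Rightarrow> real. (\<exists>i\<le>d. v i \<noteq> 0) \<longrightarrow> 0 < (\<Sum>i\<le>d. \<Sum>j\<le>d. v i * A i j * v j))"

definition sos_deg :: "nat \<Rightarrow> real poly \<Rightarrow> bool" where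
  "sos_deg d \<sigma> \<longleftrightarrow> degree \<sigma> \<le> 2 * d \<and> (\<exists>ps. \<sigma> = (\<Sum>p\<leftarrow>ps. p ^ 2))"

end

theory Submission imports Defs begin

definition qf :: "(nat \<Rightarrow> nat \<Rightarrow> real) \<Rightarrow> nat \<Rightarrow> (nat \<Rightarrow> real) \<Rightarrow> real" where
  "qf A d v = (\<Sum>i\<le>d. \<Sum>j\<le>d. v i * A i j * v j)"

lemma int_expand:
  assumes I: "\<And>k. integrable M (\<lambda>x::real. x ^ k)"
  shows "integrable M (\<lambda>x. x^m * (\<Sum>i\<le>d. v i * x^i)^2)"
    "integral\<^sup>L M (\<lambda>x. x^m * (\<Sum>i\<le>d. v i * x^i)^2) = qf (\<lambda>i j. moment_seq M (i+j+m)) d v"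
proof -
  have eq: "\<And>x. x^m * (\<Sum>i\<le>d. v i * x^i)^2 = (\<Sum>i\<le>d. \<Sum>j\<le>d. (v i * v j) * x^(i+j+m))"
    by (simp add: power2_eq_square sum_product sum_distrib_left power_add algebra_simps)
  have int: "integrable M (\<lambda>x. \<Sum>i\<le>d. \<Sum>j\<le>d. (v i * v j) * x^(i+j+m))"
    by (simp add: I)
  then show "integrable M (\<lambda>x. x^m * (\<Sum>i\<le>d. v i * x^i)^2)" by (simp only: eq)
  have "integral\<^sup>L M (\<lambda>x. \<Sum>i\<le>d. \<Sum>j\<le>d. (v i * v j) * x^(i+j+m))
     = (\<Sum>i\<le>d. \<Sum>j\<le>d. (v i * v j) * moment_seq M (i+j+m))"
    by (simp add: integral_sum integrable_sum I moment_seq_def)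
  then show "integral\<^sup>L M (\<lambda>x. x^m * (\<Sum>i\<le>d. v i * x^i)^2) = qf (\<lambda>i j. moment_seq M (i+j+m)) d v"
    by (simp only: eq qf_def) (simp add: algebra_simps)
qed

lemma poly_le_deg: "degree (p::real poly) \<le> d \<Longrightarrow> poly p x = (\<Sum>i\<le>d. coeff p i * x^i)"
proof -
  assume a: "degree p \<le> d"
  have "poly p x = (\<Sum>i\<le>degree p. coeff p i * x^i)" by (rule poly_altdef)
  also have "\<dots> = (\<Sum>i\<le>d. coeff p i * x^i)"
    by (rule sum.mono_neutral_left) (use a in \<open>auto simp: coeff_eq_0\<close>)
  finally show ?thesis .
qed

lemma int_sos:
  assumes I: "\<And>k. integrable M (\<lambda>x::real. x ^ k)"
    and deg: "\<forall>p\<in>set ps. degree p \<le> d"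
  shows "integrable M (\<lambda>x. x^m * poly (\<Sum>p\<leftarrow>ps. p^2) x) \<and>
    integral\<^sup>L M (\<lambda>x. x^m * poly (\<Sum>p\<leftarrow>ps. p^2) x) = (\<Sum>p\<leftarrow>ps. qf (\<lambda>i j. moment_seq M (i+j+m)) d (coeff p))"
  using deg
proof (induction ps)
  case Nil
  then show ?case by simp
next
  case (Cons p ps)
  have e: "\<And>x. x^m * poly p x ^ 2 = x^m * (\<Sum>i\<le>d. coeff p i * x^i)^2"
  proof -
    fix x
    have "degree p \<le> d" using Cons.prems by simp
    then show "x^m * poly p x ^ 2 = x^m * (\<Sum>i\<le>d. coeff p i * x^i)^2" by (simp only: poly_le_deg)
  qed
  have i1: "integrable M (\<lambda>x. x^m * poly p x ^ 2)"
    unfolding e by (rule int_expand(1)[OF I])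
  have v1: "integral\<^sup>L M (\<lambda>x. x^m * poly p x ^ 2) = qf (\<lambda>i j. moment_seq M (i+j+m)) d (coeff p)"
    unfolding e by (rule int_expand(2)[OF I])
  have e2: "\<And>x. x^m * poly (\<Sum>p\<leftarrow>p#ps. p^2) x = x^m * poly p x ^ 2 + x^m * poly (\<Sum>p\<leftarrow>ps. p^2) x"
    by (simp add: algebra_simps)
  from Cons have ih: "integrable M (\<lambda>x. x^m * poly (\<Sum>p\<leftarrow>ps. p^2) x)"
    "integral\<^sup>L M (\<lambda>x. x^m * poly (\<Sum>p\<leftarrow>ps. p^2) x) = (\<Sum>p\<leftarrow>ps. qf (\<lambda>i j. moment_seq M (i+j+m)) d (coeff p))"
    by auto
  show ?case unfolding e2 using i1 v1 ih by simp
qed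

lemma box_compact: "compact (PiE UNIV (\<lambda>i::nat. if i \<le> d then {-1..1::real} else {0}))"
proof -
  have "compactin (product_topology (\<lambda>i. euclidean) UNIV) (PiE UNIV (\<lambda>i::nat. if i \<le> d then {-1..1::real} else {0}))"
    by (subst compactin_PiE) auto
  thus ?thesis by (metis euclidean_product_topology compactin_euclidean_iff)
qed

lemma qf_scale: "qf A d (\<lambda>i. if i\<le>d then c * v i else z i) = c^2 * qf A d v"
  by (simp add: qf_def sum_distrib_left power2_eq_square mult_ac cong: sum.cong_simp)

lemma qf_zero: "\<forall>i\<le>d. v i = 0 \<Longrightarrow> qf A d v = 0"
  by (simp add: qf_def)

lemma coord_cont[continuous_intros]: "continuous_on S (\<lambda>x::nat\<Rightarrow>real. x i)"
  by (rule continuous_on_subset[OF continuous_on_product_coordinates]) auto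

lemma qf_cont: "continuous_on S (qf A d)"
  unfolding qf_def by (intro continuous_intros)

lemma rayleigh_min:
  fixes A B :: "nat \<Rightarrow> nat \<Rightarrow> real"
  assumes pdB: "\<forall>v. (\<exists>i\<le>d. v i \<noteq> 0) \<longrightarrow> qf B d v > 0"
  shows "\<exists>w. (\<exists>i\<le>d. w i \<noteq> 0) \<and> (\<forall>v. qf A d w * qf B d v \<le> qf A d v * qf B d w)"
proof -
  define Bx where "Bx = PiE UNIV (\<lambda>i::nat. if i \<le> d then {-1..1::real} else {0})"
  define C where "C = Bx \<inter> {v. (\<Sum>i\<le>d. (v i)^2) = 1}"
  have cl: "closed {v::nat\<Rightarrow>real. (\<Sum>i\<le>d. (v i)^2) = 1}"
    by (intro closed_Collect_eq continuous_intros continuous_on_product_coordinates)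
  have cC: "compact C" unfolding C_def Bx_def using box_compact cl by (rule compact_Int_closed)
  have nz: "\<exists>i\<le>d. v i \<noteq> 0" if "v \<in> C" for v
  proof (rule ccontr)
    assume "\<not> ?thesis"
    then have "(\<Sum>i\<le>d. (v i)^2) = 0" by simp
    with that show False by (simp add: C_def)
  qed
  have "(\<Sum>i\<le>d. (if i = 0 then 1 else 0::real)^2) = (\<Sum>i\<le>d. if i = 0 then 1 else 0)"
    by (rule sum.cong) auto
  then have e0: "(\<lambda>i. if i = 0 then 1 else 0) \<in> C"
    by (simp add: C_def Bx_def PiE_iff)
  have Bpos: "qf B d v > 0" if "v \<in> C" for v using pdB nz[OF that] by blast
  have cont: "continuous_on C (\<lambda>v. qf A d v / qf B d v)"
  proof -
    have "\<forall>v\<in>C. qf B d v \<noteq> 0" using Bpos by (metis less_irrefl)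
    then show ?thesis using continuous_on_divide[OF qf_cont qf_cont] by blast
  qed
  obtain w where wC: "w \<in> C" and wmin: "\<And>u. u \<in> C \<Longrightarrow> qf A d w / qf B d w \<le> qf A d u / qf B d u"
    using continuous_attains_inf[OF cC _ cont] e0 by blast
  show ?thesis
  proof (rule exI[of _ w], intro conjI allI)
    show "\<exists>i\<le>d. w i \<noteq> 0" using nz[OF wC] .
    fix v
    show "qf A d w * qf B d v \<le> qf A d v * qf B d w"
    proof (cases "\<forall>i\<le>d. v i = 0")
      case True
      then show ?thesis by (simp add: qf_zero)
    next
      case False
      define s where "s = sqrt (\<Sum>i\<le>d. (v i)^2)"
      have "(\<Sum>i\<le>d. (v i)^2) > 0"
      proof -
        obtain i where "i \<le> d" "v i \<noteq> 0" using False by blast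
        then have "(v i)^2 \<le> (\<Sum>i\<le>d. (v i)^2)" "(v i)^2 > 0"
          by (auto intro: member_le_sum)
        then show ?thesis by linarith
      qed
      then have s0: "s > 0" and ss: "s^2 = (\<Sum>i\<le>d. (v i)^2)" by (auto simp: s_def)
      define u where "u = (\<lambda>i. if i \<le> d then (1/s) * v i else 0)"
      have "u \<in> C"
      proof -
        have vb: "\<bar>v i\<bar> \<le> s" if "i \<le> d" for i
        proof -
          have "(v i)^2 \<le> (\<Sum>i\<le>d. (v i)^2)" using that by (auto intro: member_le_sum)
          then show ?thesis unfolding s_def by (metis real_sqrt_abs real_sqrt_le_mono)
        qed
        have ub: "\<bar>u i\<bar> \<le> 1" if "i \<le> d" for i
        proof -
          have "\<bar>u i\<bar> = \<bar>v i\<bar> / s" using that s0 by (simp add: u_def abs_mult)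
          also have "\<dots> \<le> 1" using vb[OF that] s0 by (simp add: divide_le_eq)
          finally show ?thesis .
        qed
        have "u \<in> Bx" unfolding Bx_def PiE_iff
        proof (intro conjI ballI)
          fix i :: nat
          show "u i \<in> (if i \<le> d then {-1..1} else {0})"
          proof (cases "i \<le> d")
            case True
            then show ?thesis using ub[OF True] by (simp add: abs_le_iff)
          next
            case False
            then show ?thesis by (simp add: u_def)
          qed
        qed simp
        moreover have "(\<Sum>i\<le>d. (u i)^2) = 1"
        proof -
          have "(\<Sum>i\<le>d. (u i)^2) = (\<Sum>i\<le>d. (v i)^2 / s^2)"
            by (rule sum.cong) (auto simp: u_def power_divide)
          also have "\<dots> = (\<Sum>i\<le>d. (v i)^2) / s^2" by (simp add: sum_divide_distrib)
          also have "\<dots> = s^2 / s^2" using ss by simp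
          also have "\<dots> = 1" using s0 by simp
          finally show ?thesis .
        qed
        ultimately show ?thesis by (simp add: C_def)
      qed
      then have "qf A d w / qf B d w \<le> qf A d u / qf B d u" by (rule wmin)
      also have "qf A d u / qf B d u = qf A d v / qf B d v"
        using s0 by (simp add: u_def qf_scale)
      finally have "qf A d w / qf B d w \<le> qf A d v / qf B d v" .
      moreover have "qf B d w > 0" using Bpos wC by blast
      moreover have "qf B d v > 0" using pdB False by blast
      ultimately show ?thesis by (simp add: divide_le_eq le_divide_eq mult_ac)
    qed
  qed
qed

lemma psd_kernel:
  assumes sym: "\<And>i j. A i j = A j i" and psd: "\<And>u. 0 \<le> qf A d u" and z: "qf A d v = 0"
  shows "\<forall>i\<le>d. (\<Sum>j\<le>d. A i j * v j) = 0"
proof -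
  define g where "g i = (\<Sum>j\<le>d. A i j * v j)" for i
  define G where "G = (\<Sum>i\<le>d. (g i)^2)"
  define q where "q = qf A d g"
  have c1: "(\<Sum>i\<le>d. \<Sum>j\<le>d. g i * A i j * v j) = G"
    by (simp add: G_def g_def power2_eq_square sum_distrib_left mult_ac)
  have c2: "(\<Sum>i\<le>d. \<Sum>j\<le>d. v i * A i j * g j) = G"
  proof -
    have "(\<Sum>i\<le>d. \<Sum>j\<le>d. v i * A i j * g j) = (\<Sum>j\<le>d. \<Sum>i\<le>d. v i * A i j * g j)"
      by (rule sum.swap)
    also have "\<dots> = (\<Sum>j\<le>d. \<Sum>i\<le>d. g j * A j i * v i)" by (simp add: sym mult_ac)
    finally show ?thesis using c1 by simp
  qed
  have exp: "qf A d (\<lambda>i. v i - t * g i) = qf A d v - 2 * t * G + t^2 * q" for t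
  proof -
    have "qf A d (\<lambda>i. v i - t * g i) = qf A d v - t * (\<Sum>i\<le>d. \<Sum>j\<le>d. g i * A i j * v j)
       - t * (\<Sum>i\<le>d. \<Sum>j\<le>d. v i * A i j * g j) + t^2 * qf A d g"
      by (simp add: qf_def algebra_simps sum.distrib sum_subtractf sum_distrib_left power2_eq_square)
    then show ?thesis using c1 c2 by (simp add: q_def)
  qed
  have q0: "q \<ge> 0" using psd q_def by simp
  have G0: "G \<ge> 0" by (simp add: G_def sum_nonneg)
  define t where "t = G / (q + 1)"
  have "0 \<le> qf A d v - 2 * t * G + t^2 * q" using psd exp by metis
  then have "0 \<le> - 2 * t * G + t^2 * q" using z by simp
  moreover have "(q+1)^2 * (- 2 * t * G + t^2 * q) = -(G^2) * (q+2)"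
  proof -
    have "q + 1 \<noteq> 0" using q0 by simp
    then have "G = t * (q+1)" by (simp add: t_def)
    then show ?thesis by (simp add: power2_eq_square algebra_simps)
  qed
  moreover have "0 \<le> (q+1)^2 * (- 2 * t * G + t^2 * q)"
    using calculation(1) by (intro mult_nonneg_nonneg) simp_all
  ultimately have "0 \<le> -(G^2) * (q+2)" by linarith
  then have "G^2 * (q + 2) \<le> 0" by simp
  then have "G^2 \<le> 0" using q0
    by (metis add_nonneg_pos mult_le_0_iff not_le zero_less_numeral)
  then have "G = 0" by simp
  then have "\<forall>i\<le>d. (g i)^2 = 0" unfolding G_def by (simp add: sum_nonneg_eq_0_iff)
  then show ?thesis by (simp add: g_def)
qed

lemma sos_deg_aux:
  fixes ps :: "real poly list"
  shows "((\<Sum>p\<leftarrow>ps. p^2) = 0 \<or> lead_coeff (\<Sum>p\<leftarrow>ps. p^2) > 0) \<and>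
         (\<forall>p\<in>set ps. 2 * degree p \<le> degree (\<Sum>p\<leftarrow>ps. p^2))"
proof (induction ps)
  case Nil
  then show ?case by simp
next
  case (Cons p ps)
  define s where "s = (\<Sum>p\<leftarrow>ps. p^2)"
  have IH: "s = 0 \<or> lead_coeff s > 0" "\<forall>q\<in>set ps. 2 * degree q \<le> degree s"
    using Cons.IH by (auto simp: s_def)
  have eq: "(\<Sum>p\<leftarrow>p#ps. p^2) = p^2 + s" by (simp add: s_def)
  show ?case
  proof (cases "p = 0")
    case True
    then show ?thesis using IH by (simp add: eq s_def)
  next
    case False
    define D where "D = max (2 * degree p) (degree s)"
    have dp: "degree (p^2) = 2 * degree p" using False by (simp add: degree_power_eq)
    have lp: "lead_coeff (p^2) > 0" using False by (simp add: lead_coeff_power)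
    have c1: "coeff (p^2) D \<ge> 0"
    proof (cases "2 * degree p = D")
      case True then show ?thesis using lp dp by simp
    next
      case F: False
      then have "degree (p^2) < D" using dp by (simp add: D_def)
      then show ?thesis by (simp add: coeff_eq_0)
    qed
    have c2: "coeff s D \<ge> 0"
    proof (cases "degree s = D")
      case True then show ?thesis using IH(1) by auto
    next
      case F: False
      then have "degree s < D" by (simp add: D_def)
      then show ?thesis by (simp add: coeff_eq_0)
    qed
    have pos: "coeff (p^2 + s) D > 0"
    proof (cases "2 * degree p = D")
      case True
      then have "coeff (p^2) D > 0" using lp dp by simp
      then show ?thesis using c2 by simp
    next
      case F: False
      then have dsD: "degree s = D" and "D > 0" by (auto simp: D_def)
      then have "s \<noteq> 0" by auto
      then have "coeff s D > 0" using IH(1) dsD by auto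
      then show ?thesis using c1 by simp
    qed
    have dD: "degree (p^2 + s) = D"
    proof (rule antisym)
      show "degree (p^2 + s) \<le> D" using degree_add_le_max[of "p^2" s] dp by (simp add: D_def)
      show "D \<le> degree (p^2 + s)" using pos by (intro le_degree) simp
    qed
    have "lead_coeff (p^2 + s) > 0" using pos dD by simp
    moreover have "\<forall>q\<in>set (p#ps). 2 * degree q \<le> degree (p^2 + s)"
      using IH(2) dD by (auto simp: D_def)
    ultimately show ?thesis unfolding eq by blast
  qed
qed

lemma sos_deg_le:
  fixes ps :: "real poly list"
  assumes "degree (\<Sum>p\<leftarrow>ps. p^2) \<le> 2 * d"
  shows "\<forall>p\<in>set ps. degree p \<le> d"
  using sos_deg_aux[of ps] assms by fastforce

lemma hankel_eq: "hankel n y i j = y (i + j)"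
  by (simp add: hankel_def hankel_loc_def)

lemma hl_theta: "hankel_loc d (theta a) y i j = y (i+j+1) - a * y (i+j)"
  by (simp add: hankel_loc_def theta_def numeral_eq_Suc atMost_Suc algebra_simps)

lemma hl_mtheta: "hankel_loc d (- theta b) y i j = b * y (i+j) - y (i+j+1)"
  by (simp add: hankel_loc_def theta_def numeral_eq_Suc atMost_Suc algebra_simps)

lemma hl_theta_fun: "hankel_loc d (theta a) y = (\<lambda>i j. y (i+j+1) - a * y (i+j))"
  by (intro ext) (simp add: hl_theta)

lemma hl_mtheta_fun: "hankel_loc d (- theta b) y = (\<lambda>i j. b * y (i+j) - y (i+j+1))"
  by (intro ext) (simp add: hl_mtheta)

lemma qf_lin1: "qf (\<lambda>i j. A i j - a * B i j) d v = qf A d v - a * qf B d v"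
  by (simp add: qf_def algebra_simps sum_subtractf sum_distrib_left)

lemma qf_lin2: "qf (\<lambda>i j. b * B i j - A i j) d v = b * qf B d v - qf A d v"
  by (simp add: qf_def algebra_simps sum_subtractf sum_distrib_left)

lemma qf_neg: "qf (\<lambda>i j. - A i j) d v = - qf A d v"
  by (simp add: qf_def sum_negf)

lemma build_poly:
  fixes c :: real and w :: "nat \<Rightarrow> real" and d :: nat
  defines "u \<equiv> (\<lambda>i. if i \<le> d then c * w i else 0)"
  defines "p \<equiv> (\<Sum>i\<le>d. monom (u i) i)"
  shows "coeff p = u" "degree p \<le> d"
proof -
  show cp: "coeff p = u"
  proof
    fix i
    show "coeff p i = u i"
      by (cases "i \<le> d") (simp_all add: p_def coeff_sum coeff_monom u_def)
  qed
  show "degree p \<le> d" by (rule degree_le) (simp add: cp u_def)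
qed

theorem theorem3p5:
  fixes M :: "real measure" and d :: nat
  assumes "sets M = sets borel"
    and "finite_measure M"
    and "\<And>k. integrable M (\<lambda>x. x ^ k)"
    and "\<And>n. pd n (hankel n (moment_seq M))"
  shows
    "let y = moment_seq M;
         ad = (GREATEST a. psd d (hankel_loc d (theta a) y));
         bd = (LEAST b. psd d (hankel_loc d (- theta b) y));
         S = {integral\<^sup>L M (\<lambda>x. x * poly \<sigma> x) | \<sigma>. sos_deg d \<sigma> \<and> integral\<^sup>L M (poly \<sigma>) = 1};
         ads = Inf S;
         bds = Sup S
     in
       psd d (hankel_loc d (theta ad) y) \<and> (\<forall>a. psd d (hankel_loc d (theta a) y) \<longrightarrow> a \<le> ad) \<and>
       psd d (hankel_loc d (- theta bd) y) \<and> (\<forall>b. psd d (hankel_loc d (- theta b) y) \<longrightarrow> bd \<le> b) \<and>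
       ad = ads \<and> bd = bds \<and>
       (\<exists>\<sigma>s. sos_deg d \<sigma>s \<and> integral\<^sup>L M (poly \<sigma>s) = 1 \<and>
            integral\<^sup>L M (\<lambda>x. x * poly \<sigma>s x) = ads \<and>
            integral\<^sup>L M (\<lambda>x. (x - ad) * poly \<sigma>s x) = 0 \<and>
            (\<forall>ps. (\<forall>p\<in>set ps. degree p \<le> d) \<and> \<sigma>s = (\<Sum>p\<leftarrow>ps. p ^ 2) \<longrightarrow>
                 (\<forall>p\<in>set ps. \<forall>i\<le>d. (\<Sum>j\<le>d. hankel_loc d (theta ad) y i j * coeff p j) = 0))) \<and>
       (\<exists>\<psi>s. sos_deg d \<psi>s \<and> integral\<^sup>L M (poly \<psi>s) = 1 \<and>
            integral\<^sup>L M (\<lambda>x. x * poly \<psi>s x) = bds \<and>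
            integral\<^sup>L M (\<lambda>x. (bd - x) * poly \<psi>s x) = 0)"
proof -
  note I = assms(3)
  define y where "y = moment_seq M"
  define GY where "GY = (\<lambda>i j. y (i + j))"
  define XY where "XY = (\<lambda>i j. y (i + j + 1))"
  define N where "N = qf GY d"
  define X where "X = qf XY d"
  have GY0: "(\<lambda>i j. moment_seq M (i + j + 0)) = GY" by (simp add: GY_def y_def)
  have XY1: "(\<lambda>i j. moment_seq M (i + j + 1)) = XY" by (simp add: XY_def y_def)
  have pdN: "\<forall>v. (\<exists>i\<le>d. v i \<noteq> 0) \<longrightarrow> qf GY d v > 0"
    using assms(4)[of d] by (simp add: pd_def qf_def hankel_eq GY_def y_def)
  have psdA: "psd d (hankel_loc d (theta a) y) \<longleftrightarrow> (\<forall>v. a * N v \<le> X v)" for a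
  proof -
    have "qf (hankel_loc d (theta a) y) d v = X v - a * N v" for v
      using qf_lin1[of XY a GY d v] by (simp add: hl_theta_fun X_def N_def XY_def GY_def)
    then show ?thesis unfolding psd_def qf_def[symmetric] by simp
  qed
  have psdB: "psd d (hankel_loc d (- theta b) y) \<longleftrightarrow> (\<forall>v. X v \<le> b * N v)" for b
  proof -
    have "qf (hankel_loc d (- theta b) y) d v = b * N v - X v" for v
      using qf_lin2[of b GY XY d v] by (simp add: hl_mtheta_fun X_def N_def XY_def GY_def)
    then show ?thesis unfolding psd_def qf_def[symmetric] by simp
  qed
  obtain w1 where w1nz: "\<exists>i\<le>d. w1 i \<noteq> 0" and w1: "\<forall>v. X w1 * N v \<le> X v * N w1"
    using rayleigh_min[OF pdN, of XY] unfolding X_def N_def by blast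
  obtain w2 where w2nz: "\<exists>i\<le>d. w2 i \<noteq> 0" and w2': "\<forall>v. - X w2 * N v \<le> - X v * N w2"
    using rayleigh_min[OF pdN, of "\<lambda>i j. - XY i j"] unfolding X_def N_def qf_neg by blast
  have Nw1: "N w1 > 0" using pdN w1nz N_def by blast
  have Nw2: "N w2 > 0" using pdN w2nz N_def by blast
  define r1 where "r1 = X w1 / N w1"
  define r2 where "r2 = X w2 / N w2"
  have r1le: "r1 * N v \<le> X v" for v
  proof -
    have "X w1 * N v \<le> X v * N w1" using w1 by blast
    then show ?thesis using Nw1 unfolding r1_def by (simp add: field_simps)
  qed
  have r2ge: "X v \<le> r2 * N v" for v
  proof -
    have "X v * N w2 \<le> X w2 * N v" using w2' by (metis mult_minus_left neg_le_iff_le)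
    then show ?thesis using Nw2 unfolding r2_def by (simp add: field_simps)
  qed
  have Xw1: "X w1 = r1 * N w1" using Nw1 by (simp add: r1_def)
  have Xw2: "X w2 = r2 * N w2" using Nw2 by (simp add: r2_def)
  have A_le: "a \<le> r1" if "psd d (hankel_loc d (theta a) y)" for a
  proof -
    have "a * N w1 \<le> r1 * N w1" using that psdA Xw1 by metis
    then show "a \<le> r1" using Nw1 by simp
  qed
  have B_ge: "r2 \<le> b" if "psd d (hankel_loc d (- theta b) y)" for b
  proof -
    have "r2 * N w2 \<le> b * N w2" using that psdB Xw2 by metis
    then show "r2 \<le> b" using Nw2 by simp
  qed
  have PA: "psd d (hankel_loc d (theta r1) y)" using psdA r1le by blast
  have PB: "psd d (hankel_loc d (- theta r2) y)" using psdB r2ge by blast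
  have Geq: "(GREATEST a. psd d (hankel_loc d (theta a) y)) = r1"
    using PA A_le by (rule Greatest_equality)
  have Leq: "(LEAST b. psd d (hankel_loc d (- theta b) y)) = r2"
    using PB B_ge by (rule Least_equality)
  have intN: "integrable M (poly (\<Sum>p\<leftarrow>ps. p^2)) \<and> integral\<^sup>L M (poly (\<Sum>p\<leftarrow>ps. p^2)) = (\<Sum>p\<leftarrow>ps. N (coeff p))"
    if "\<forall>p\<in>set ps. degree p \<le> d" for ps
    using int_sos[OF I that, of 0] by (simp add: GY_def y_def N_def)
  have intX: "integrable M (\<lambda>x. x * poly (\<Sum>p\<leftarrow>ps. p^2) x) \<and> integral\<^sup>L M (\<lambda>x. x * poly (\<Sum>p\<leftarrow>ps. p^2) x) = (\<Sum>p\<leftarrow>ps. X (coeff p))"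
    if "\<forall>p\<in>set ps. degree p \<le> d" for ps
    using int_sos[OF I that, of 1] by (simp add: XY_def y_def X_def)
  define S where "S = {integral\<^sup>L M (\<lambda>x. x * poly \<sigma> x) | \<sigma>. sos_deg d \<sigma> \<and> integral\<^sup>L M (poly \<sigma>) = 1}"
  have Sbounds: "r1 \<le> z \<and> z \<le> r2" if zS: "z \<in> S" for z
  proof -
    obtain \<sigma> where z: "z = integral\<^sup>L M (\<lambda>x. x * poly \<sigma> x)" and sd: "sos_deg d \<sigma>"
      and one: "integral\<^sup>L M (poly \<sigma>) = 1" using zS unfolding S_def by blast
    obtain ps where ps: "\<sigma> = (\<Sum>p\<leftarrow>ps. p^2)" and dg: "degree \<sigma> \<le> 2 * d"
      using sd unfolding sos_deg_def by blast
    have dps: "\<forall>p\<in>set ps. degree p \<le> d" using sos_deg_le dg ps by blast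
    have n1: "(\<Sum>p\<leftarrow>ps. N (coeff p)) = 1" using intN[OF dps] one ps by simp
    have zX: "z = (\<Sum>p\<leftarrow>ps. X (coeff p))" using intX[OF dps] z ps by simp
    have "r1 = (\<Sum>p\<leftarrow>ps. r1 * N (coeff p))" using n1 by (simp add: sum_list_const_mult)
    also have "\<dots> \<le> (\<Sum>p\<leftarrow>ps. X (coeff p))" by (rule sum_list_mono) (rule r1le)
    finally have "r1 \<le> z" using zX by simp
    moreover have "(\<Sum>p\<leftarrow>ps. X (coeff p)) \<le> (\<Sum>p\<leftarrow>ps. r2 * N (coeff p))" by (rule sum_list_mono) (rule r2ge)
    then have "z \<le> r2" using n1 zX by (simp add: sum_list_const_mult)
    ultimately show ?thesis by simp
  qed
  have optimal: "\<exists>\<sigma>s. sos_deg d \<sigma>s \<and> integral\<^sup>L M (poly \<sigma>s) = 1 \<and>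
            integral\<^sup>L M (\<lambda>x. x * poly \<sigma>s x) = r \<and> integrable M (poly \<sigma>s) \<and>
            integrable M (\<lambda>x. x * poly \<sigma>s x)"
    if Nw: "N w > 0" and Xw: "X w = r * N w" for w r
  proof -
    define c where "c = 1 / sqrt (N w)"
    define u where "u = (\<lambda>i. if i \<le> d then c * w i else 0)"
    define p where "p = (\<Sum>i\<le>d. monom (u i) i)"
    have cp: "coeff p = u" and dp: "degree p \<le> d"
      using build_poly[of d c w] unfolding u_def p_def by auto
    have c2: "c^2 * N w = 1" using Nw by (simp add: c_def power_divide)
    have Nu: "N u = 1" using c2 by (simp add: N_def u_def qf_scale)
    have Xu: "X u = r" using c2 Xw by (simp add: X_def u_def qf_scale[of XY d c w] N_def)
    have d1: "\<forall>q\<in>set [p]. degree q \<le> d" using dp by simp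
    have sd: "sos_deg d (p^2)"
      unfolding sos_deg_def
    proof
      show "degree (p^2) \<le> 2 * d" using degree_power_le[of p 2] dp by simp
      show "\<exists>ps. p^2 = (\<Sum>p\<leftarrow>ps. p^2)" by (rule exI[of _ "[p]"]) simp
    qed
    show ?thesis
      using sd intN[OF d1] intX[OF d1] Nu Xu cp by (intro exI[of _ "p^2"]) simp
  qed
  obtain \<sigma>s where s1: "sos_deg d \<sigma>s" "integral\<^sup>L M (poly \<sigma>s) = 1"
      "integral\<^sup>L M (\<lambda>x. x * poly \<sigma>s x) = r1" "integrable M (poly \<sigma>s)"
      "integrable M (\<lambda>x. x * poly \<sigma>s x)"
    using optimal[OF Nw1 Xw1] by blast
  obtain \<psi>s where s2: "sos_deg d \<psi>s" "integral\<^sup>L M (poly \<psi>s) = 1"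
      "integral\<^sup>L M (\<lambda>x. x * poly \<psi>s x) = r2" "integrable M (poly \<psi>s)"
      "integrable M (\<lambda>x. x * poly \<psi>s x)"
    using optimal[OF Nw2 Xw2] by blast
  have r1S: "r1 \<in> S" using s1 unfolding S_def by blast
  have r2S: "r2 \<in> S" using s2 unfolding S_def by blast
  have Inf: "Inf S = r1" using r1S Sbounds by (intro cInf_eq_minimum) auto
  have Sup: "Sup S = r2" using r2S Sbounds by (intro cSup_eq_maximum) auto
  have z1: "integral\<^sup>L M (\<lambda>x. (x - r1) * poly \<sigma>s x) = 0"
  proof -
    have "integral\<^sup>L M (\<lambda>x. (x - r1) * poly \<sigma>s x) = integral\<^sup>L M (\<lambda>x. x * poly \<sigma>s x - r1 * poly \<sigma>s x)"
      by (simp add: algebra_simps)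
    also have "\<dots> = r1 - r1 * 1" using s1 by (simp add: integral_diff)
    finally show ?thesis by simp
  qed
  have z2: "integral\<^sup>L M (\<lambda>x. (r2 - x) * poly \<psi>s x) = 0"
  proof -
    have "integral\<^sup>L M (\<lambda>x. (r2 - x) * poly \<psi>s x) = integral\<^sup>L M (\<lambda>x. r2 * poly \<psi>s x - x * poly \<psi>s x)"
      by (simp add: algebra_simps)
    also have "\<dots> = r2 * 1 - r2" using s2 by (simp add: integral_diff)
    finally show ?thesis by simp
  qed
  have kernel: "\<forall>p\<in>set ps. \<forall>i\<le>d. (\<Sum>j\<le>d. hankel_loc d (theta r1) y i j * coeff p j) = 0"
    if dps: "\<forall>p\<in>set ps. degree p \<le> d" and eq: "\<sigma>s = (\<Sum>p\<leftarrow>ps. p ^ 2)" for ps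
  proof -
    define H where "H = hankel_loc d (theta r1) y"
    have qH: "qf H d v = X v - r1 * N v" for v
      using qf_lin1[of XY r1 GY d v] by (simp add: H_def hl_theta_fun X_def N_def XY_def GY_def)
    have symH: "H i j = H j i" for i j by (simp add: H_def hl_theta add.commute)
    have psdH: "0 \<le> qf H d v" for v using qH r1le[of v] by simp
    have "0 = r1 - r1 * 1" by simp
    also have "\<dots> = (\<Sum>p\<leftarrow>ps. X (coeff p)) - r1 * (\<Sum>p\<leftarrow>ps. N (coeff p))"
      using s1 intN[OF dps] intX[OF dps] eq by simp
    also have "\<dots> = (\<Sum>p\<leftarrow>ps. qf H d (coeff p))"
      by (simp add: qH sum_list_subtractf sum_list_const_mult)
    finally have "(\<Sum>p\<leftarrow>ps. qf H d (coeff p)) = 0" by simp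
    then have "\<forall>x\<in>set (map (\<lambda>p. qf H d (coeff p)) ps). x = 0"
      using sum_list_nonneg_eq_0_iff[of "map (\<lambda>p. qf H d (coeff p)) ps"] psdH by auto
    then have "\<forall>p\<in>set ps. qf H d (coeff p) = 0" by simp
    then show ?thesis using psd_kernel[of H d] symH psdH unfolding H_def by blast
  qed
  show ?thesis
    unfolding Let_def y_def[symmetric] S_def[symmetric] Geq Leq Inf Sup
    using PA A_le PB B_ge s1 s2 z1 z2 kernel by blast
qed

end
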